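(* Let $F:(0,\infty)\times(0,\infty)\to\mathbb{R}$ satisfy Assumption (P) below, let $G$ be the function in (P)(ii), and let $f>0$. (i) Fix $\alpha>0$ and $\beta>0$. If $G(\beta)/\alpha<1/(1+f)$, then the system $$\frac{1-d^A}{1-d^B}=\frac{1}{\beta}G^{-1}\big(\alpha/(1+f)\big),\qquad F\big(\beta(1-d^A),1-d^B\big)=F(\beta,1)$$ admits a unique solution $(d^A,d^B)$ with $d^A\in(0,1)$ and $d^B<0$. If $G(\beta)/\alpha>1+f$, then the system $$\frac{1-d^A}{1-d^B}=\frac{1}{\beta}G^{-1}\big(\alpha(1+f)\big),\qquad F\big(\beta(1-d^A),1-d^B\big)=F(\beta,1)$$ admits a unique solution $(d^A,d^B)$ with $d^A<0$ and $d^B\in(0,1)$. Denote by $(\varphi^A(\alpha,\beta),\varphi^B(\alpha,\beta))$ the solution in these two cases, and set $(\varphi^A(\alpha,\beta),\varphi^B(\alpha,\beta))=(0,0)$ when $G(\beta)/\alpha\in[1/(1+f),1+f]$. Then for $i\in\{A,B\}$, $\varphi^i$ is continuous on $(0,\infty)\times(0,\infty)$ and equals $0$ on the region $\{G(\beta)/\alpha\in[1/(1+f),1+f]\}$; moreover, on the region $\{G(\beta)/\alpha\notin[1/(1+f),1+f]\}$, $\varphi^A(\alpha,\beta)$ is strictly increasing and $\varphi^B(\alpha,\beta)$ is strictly decreasing in each of $\alpha$ and $\beta$. (ii) For any $y^A>0$, $y^B>0$, $a>0$, $b>0$, the optimization problem $$\max_{D^A,D^B}\; a(1+f\mathbf 1_{D^A<0})D^A+b(1+f\mathbf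 1_{D^B<0})D^B$$ subject to $F(y^A,y^B)=F(y^A-D^A,y^B-D^B)$, $y^A-D^A>0$, $y^B-D^B>0$, admits a unique solution $(\hat D^A,\hat D^B)$, given by $\hat D^i=\varphi^i(a/b,\,y^A/y^B)\,y^i$ for $i\in\{A,B\}$.
   Context: Assumption (P) on the pricing function $F:(0,\infty)\times(0,\infty)\to\mathbb{R}$: (i) $F$ is continuously differentiable with partial derivatives $F_x(x,y)>0$ and $F_y(x,y)>0$ for all $x,y>0$; (ii) $F_x(x,y)/F_y(x,y)=G(x/y)$ for some continuously differentiable function $G:(0,\infty)\to(0,\infty)$ with $G'(z)<0$ for all $z>0$, $\lim_{z\downarrow0}G(z)=\infty$ and $\lim_{z\uparrow\infty}G(z)=0$; (iii) if $F(x,y)=F(x',y')$ then $F(cx,cy)=F(cx',cy')$ for every $c>0$. $G^{-1}$ denotes the inverse function of $G$. The constant $f>0$ is the unit trading fee; in the optimization problem, $y^A,y^B$ are the pool deposits of assets $A,B$, $D^i$ is the amount of asset $i$ withdrawn from the pool by the trader (negative means deposited), and $a,b$ are the trader's valuations of the assets. *)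

theory Defs
  imports "HOL-Analysis.Analysis"
begin

text \<open>Assumption (P) on the pricing function F (curried, only its values on the
open positive quadrant matter) with associated function G.\<close>
definition assumption_P :: "(real \<Rightarrow> real \<Rightarrow> real) \<Rightarrow> (real \<Rightarrow> real) \<Rightarrow> bool" where
  "assumption_P F G \<longleftrightarrow>
     (\<exists>Fx Fy :: real \<Rightarrow> real \<Rightarrow> real.
        continuous_on {p :: real \<times> real. fst p > 0 \<and> snd p > 0} (\<lambda>(x, y). Fx x y) \<and>
        continuous_on {p :: real \<times> real. fst p > 0 \<and> snd p > 0} (\<lambda>(x, y). Fy x y) \<and>
        (\<forall>x>0. \<forall>y>0.
           ((\<lambda>(u, v). F u v) has_derivative (\<lambda>(h, k). Fx x y * h + Fy x y * k)) (at (x, y)) \<and>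
           Fx x y > 0 \<and> Fy x y > 0 \<and> Fx x y / Fy x y = G (x / y))) \<and>
     (\<forall>z>0. G z > 0) \<and>
     (\<exists>G'. continuous_on {0<..} G' \<and>
        (\<forall>z>0. (G has_real_derivative G' z) (at z) \<and> G' z < 0)) \<and>
     filterlim G at_top (at_right 0) \<and>
     (G \<longlongrightarrow> 0) at_top \<and>
     (\<forall>x y x' y' c. x > 0 \<and> y > 0 \<and> x' > 0 \<and> y' > 0 \<and> c > 0 \<and> F x y = F x' y'
        \<longrightarrow> F (c * x) (c * y) = F (c * x') (c * y'))"

definition Ginv :: "(real \<Rightarrow> real) \<Rightarrow> real \<Rightarrow> real" where
  "Ginv G w = inv_into {0<..} G w"

definition phi_sys :: "(real \<Rightarrow> real \<Rightarrow> real) \<Rightarrow> (real \<Rightarrow> real) \<Rightarrow> real \<Rightarrow> real \<Rightarrow> real \<Rightarrow> real \<Rightarrow> bool" where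
  "phi_sys F G c \<beta> dA dB \<longleftrightarrow>
     (1 - dA) / (1 - dB) = (1 / \<beta>) * Ginv G c \<and> F (\<beta> * (1 - dA)) (1 - dB) = F \<beta> 1"

definition phi :: "(real \<Rightarrow> real \<Rightarrow> real) \<Rightarrow> (real \<Rightarrow> real) \<Rightarrow> real \<Rightarrow> real \<Rightarrow> real \<Rightarrow> real \<times> real" where
  "phi F G f \<alpha> \<beta> =
     (if G \<beta> / \<alpha> < 1 / (1 + f) then
        (THE p. 0 < fst p \<and> fst p < 1 \<and> snd p < 0 \<and> phi_sys F G (\<alpha> / (1 + f)) \<beta> (fst p) (snd p))
      else if G \<beta> / \<alpha> > 1 + f then
        (THE p. fst p < 0 \<and> 0 < snd p \<and> snd p < 1 \<and> phi_sys F G (\<alpha> * (1 + f)) \<beta> (fst p) (snd p))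
      else (0, 0))"

definition phiA where "phiA F G f \<alpha> \<beta> = fst (phi F G f \<alpha> \<beta>)"
definition phiB where "phiB F G f \<alpha> \<beta> = snd (phi F G f \<alpha> \<beta>)"

definition no_trade :: "(real \<Rightarrow> real) \<Rightarrow> real \<Rightarrow> real \<Rightarrow> real \<Rightarrow> bool" where
  "no_trade G f \<alpha> \<beta> \<longleftrightarrow> 1 / (1 + f) \<le> G \<beta> / \<alpha> \<and> G \<beta> / \<alpha> \<le> 1 + f"

definition trade_obj :: "real \<Rightarrow> real \<Rightarrow> real \<Rightarrow> real \<Rightarrow> real \<Rightarrow> real" where
  "trade_obj f a b DA DB =
     a * (1 + f * (if DA < 0 then 1 else 0)) * DA + b * (1 + f * (if DB < 0 then 1 else 0)) * DB"

definition feasible :: "(real \<Rightarrow> real \<Rightarrow> real) \<Rightarrow> real \<Rightarrow> real \<Rightarrow> real \<Rightarrow> real \<Rightarrow> bool" where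
  "feasible F yA yB DA DB \<longleftrightarrow> F yA yB = F (yA - DA) (yB - DB) \<and> yA - DA > 0 \<and> yB - DB > 0"

end

theory Submission imports Defs begin

locale PP =
  fixes F :: "real \<Rightarrow> real \<Rightarrow> real" and G :: "real \<Rightarrow> real" and Fx Fy G' :: "real \<Rightarrow> real \<Rightarrow> real"
  assumes Fd: "\<And>x y. x > 0 \<Longrightarrow> y > 0 \<Longrightarrow>
     ((\<lambda>(u, v). F u v) has_derivative (\<lambda>(h, k). Fx x y * h + Fy x y * k)) (at (x, y))"
  and Fxpos: "\<And>x y. x > 0 \<Longrightarrow> y > 0 \<Longrightarrow> Fx x y > 0"
  and Fypos: "\<And>x y. x > 0 \<Longrightarrow> y > 0 \<Longrightarrow> Fy x y > 0"
  and Fratio: "\<And>x y. x > 0 \<Longrightarrow> y > 0 \<Longrightarrow> Fx x y / Fy x y = G (x / y)"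
  and Gpos: "\<And>z. z > 0 \<Longrightarrow> G z > 0"
  and Gd: "\<And>z. z > 0 \<Longrightarrow> (G has_real_derivative G' z z) (at z) \<and> G' z z < 0"
  and Glim0: "filterlim G at_top (at_right 0)"
  and Gliminf: "(G \<longlongrightarrow> 0) at_top"
  and hom: "\<And>x y x' y' c. x > 0 \<Longrightarrow> y > 0 \<Longrightarrow> x' > 0 \<Longrightarrow> y' > 0 \<Longrightarrow> c > 0 \<Longrightarrow> F x y = F x' y'
        \<Longrightarrow> F (c * x) (c * y) = F (c * x') (c * y')"
begin

lemma seg_deriv:
  assumes "px + s*dx > 0" "py + s*dy > 0"
  shows "((\<lambda>s. F (px + s*dx) (py + s*dy)) has_real_derivative
          (Fx (px + s*dx) (py + s*dy) * dx + Fy (px + s*dx) (py + s*dy) * dy)) (at s)"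
proof -
  have k: "((\<lambda>s. (px + s*dx, py + s*dy)) has_derivative (\<lambda>h. (h*dx, h*dy))) (at s)"
    by (intro derivative_eq_intros) auto
  have c: "((\<lambda>s. (\<lambda>(u, v). F u v) (px + s*dx, py + s*dy)) has_derivative
     (\<lambda>h. (\<lambda>(h, k). Fx (px + s*dx) (py + s*dy) * h + Fy (px + s*dx) (py + s*dy) * k) (h*dx, h*dy))) (at s)"
    by (rule has_derivative_compose[OF k Fd[OF assms]])
  have c': "((\<lambda>s. F (px + s*dx) (py + s*dy)) has_derivative
     (\<lambda>h. Fx (px + s*dx) (py + s*dy) * (h*dx) + Fy (px + s*dx) (py + s*dy) * (h*dy))) (at s)"
    using c by simp
  show ?thesis unfolding has_field_derivative_def
    by (rule has_derivative_eq_rhs[OF c']) (auto simp: fun_eq_iff algebra_simps)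
qed

lemma seg_mvt:
  assumes "x1 > 0" "y1 > 0" "x2 > 0" "y2 > 0"
  shows "\<exists>s. 0 < s \<and> s < 1 \<and> x1 + s*(x2-x1) > 0 \<and> y1 + s*(y2-y1) > 0 \<and>
     F x2 y2 - F x1 y1 = Fx (x1 + s*(x2-x1)) (y1 + s*(y2-y1)) * (x2-x1) + Fy (x1 + s*(x2-x1)) (y1 + s*(y2-y1)) * (y2-y1)"
proof -
  have pos: "x1 + s*(x2-x1) > 0 \<and> y1 + s*(y2-y1) > 0" if "0 \<le> s" "s \<le> 1" for s
  proof -
    have "x1 + s*(x2-x1) = (1-s)*x1 + s*x2" "y1 + s*(y2-y1) = (1-s)*y1 + s*y2" by algebra+
    moreover have "(1-s)*x1 + s*x2 > 0" using that assms
      by (cases "s = 0") (auto intro: add_nonneg_pos add_pos_nonneg)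
    moreover have "(1-s)*y1 + s*y2 > 0" using that assms
      by (cases "s = 0") (auto intro: add_nonneg_pos add_pos_nonneg)
    ultimately show ?thesis by simp
  qed
  let ?h = "\<lambda>s. F (x1 + s*(x2-x1)) (y1 + s*(y2-y1))"
  have d: "(?h has_real_derivative (Fx (x1 + s*(x2-x1)) (y1 + s*(y2-y1)) * (x2-x1) + Fy (x1 + s*(x2-x1)) (y1 + s*(y2-y1)) * (y2-y1))) (at s)"
    if "0 \<le> s" "s \<le> 1" for s
    using seg_deriv[of x1 s "x2-x1" y1 "y2-y1"] pos[OF that] by simp
  have cont: "continuous_on {0..1} ?h"
    by (rule continuous_at_imp_continuous_on) (use d DERIV_isCont in \<open>force\<close>)
  have dif: "?h differentiable (at s)" if "0 < s" "s < 1" for s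
    using d[of s] that real_differentiable_def by fastforce
  obtain l z where lz: "0 < z" "z < 1" "DERIV ?h z :> l" "?h 1 - ?h 0 = (1 - 0) * l"
    using MVT[OF _ cont dif] by auto
  have "l = Fx (x1 + z*(x2-x1)) (y1 + z*(y2-y1)) * (x2-x1) + Fy (x1 + z*(x2-x1)) (y1 + z*(y2-y1)) * (y2-y1)"
    using DERIV_unique[OF lz(3) d[of z]] lz by simp
  then show ?thesis using lz pos[of z] by (intro exI[of _ z]) auto
qed

lemma F_mono_strict:
  assumes "x1 > 0" "y1 > 0" "x1 \<le> x2" "y1 \<le> y2" "x1 < x2 \<or> y1 < y2"
  shows "F x1 y1 < F x2 y2"
proof -
  have p: "x2 > 0" "y2 > 0" using assms by auto
  obtain s where s: "0 < s" "s < 1" "x1 + s*(x2-x1) > 0" "y1 + s*(y2-y1) > 0"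
    "F x2 y2 - F x1 y1 = Fx (x1 + s*(x2-x1)) (y1 + s*(y2-y1)) * (x2-x1) + Fy (x1 + s*(x2-x1)) (y1 + s*(y2-y1)) * (y2-y1)"
    using seg_mvt[OF assms(1,2) p] by blast
  define a where "a = Fx (x1 + s*(x2-x1)) (y1 + s*(y2-y1))"
  define b where "b = Fy (x1 + s*(x2-x1)) (y1 + s*(y2-y1))"
  have "a > 0" "b > 0" using Fxpos[OF s(3,4)] Fypos[OF s(3,4)] a_def b_def by auto
  moreover have "F x2 y2 - F x1 y1 = a*(x2-x1) + b*(y2-y1)" using s(5) a_def b_def by simp
  moreover have "a*(x2-x1) + b*(y2-y1) > 0"
    using assms(3-5) \<open>a>0\<close> \<open>b>0\<close>
  proof -
    have "a*(x2-x1) \<ge> 0" "b*(y2-y1) \<ge> 0" using assms(3,4) \<open>a>0\<close> \<open>b>0\<close> by simp_all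
    moreover have "a*(x2-x1) > 0 \<or> b*(y2-y1) > 0" using assms(5) \<open>a>0\<close> \<open>b>0\<close> by auto
    ultimately show ?thesis by linarith
  qed
  ultimately show ?thesis by simp
qed

lemma G_strict:
  assumes "0 < u" "u < v" shows "G v < G u"
proof (rule DERIV_neg_imp_decreasing[OF assms(2)])
  fix x assume "u \<le> x" "x \<le> v"
  hence "x > 0" using assms by simp
  then show "\<exists>y. DERIV G x :> y \<and> y < 0" using Gd[of x] by blast
qed

lemma G_cont: "z > 0 \<Longrightarrow> isCont G z"
  using Gd DERIV_isCont by blast

lemma tangent:
  assumes "x1 > 0" "y1 > 0" "x2 > 0" "y2 > 0" "F x1 y1 = F x2 y2" "(x1, y1) \<noteq> (x2, y2)"
  shows "G (x1/y1) * (x2 - x1) + (y2 - y1) > 0"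
proof -
  obtain s where s: "0 < s" "s < 1" "x1 + s*(x2-x1) > 0" "y1 + s*(y2-y1) > 0"
    "F x2 y2 - F x1 y1 = Fx (x1 + s*(x2-x1)) (y1 + s*(y2-y1)) * (x2-x1) + Fy (x1 + s*(x2-x1)) (y1 + s*(y2-y1)) * (y2-y1)"
    using seg_mvt[OF assms(1-4)] by blast
  define a where "a = Fx (x1 + s*(x2-x1)) (y1 + s*(y2-y1))"
  define b where "b = Fy (x1 + s*(x2-x1)) (y1 + s*(y2-y1))"
  define g where "g = G ((x1 + s*(x2-x1)) / (y1 + s*(y2-y1)))"
  have ab: "a > 0" "b > 0" using Fxpos[OF s(3,4)] Fypos[OF s(3,4)] a_def b_def by auto
  have "a / b = g" using Fratio[OF s(3,4)] a_def b_def g_def by simp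
  hence "a = g * b" using ab by (simp add: field_simps)
  moreover have "0 = a*(x2-x1) + b*(y2-y1)" using s(5) a_def b_def assms(5) by simp
  ultimately have "0 = b * (g*(x2-x1) + (y2-y1))" by (simp add: algebra_simps)
  hence dy: "y2 - y1 = - g * (x2 - x1)" using ab by simp
  have gpos: "g > 0" unfolding g_def using Gpos s(3,4) by simp
  have "x2 \<noteq> x1" using dy assms(6) by auto
  then consider "x2 > x1" | "x2 < x1" by linarith
  then show ?thesis
  proof cases
    case 1
    have "g*(x2-x1) > 0" using 1 gpos by simp
    then have "y2 < y1" using dy by linarith
    have "x1 + s*(x2-x1) > x1" using 1 s by simp
    moreover have "y1 + s*(y2-y1) < y1" using \<open>y2<y1\<close> s by (simp add: mult_pos_neg)
    ultimately have "x1/y1 < (x1 + s*(x2-x1)) / (y1 + s*(y2-y1))"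
      using assms s by (simp add: frac_less)
    hence "g < G (x1/y1)" unfolding g_def using G_strict assms by simp
    have e: "G (x1/y1) * (x2 - x1) + (y2 - y1) = (G (x1/y1) - g) * (x2 - x1)" using dy by (simp add: algebra_simps)
    have "(G (x1/y1) - g) * (x2 - x1) > 0" using \<open>g < G (x1/y1)\<close> 1 by simp
    then show ?thesis using e by simp
  next
    case 2
    have "g*(x2-x1) < 0" using 2 gpos by (simp add: mult_pos_neg)
    then have "y2 > y1" using dy by linarith
    have "x1 + s*(x2-x1) < x1" using 2 s by (simp add: mult_pos_neg)
    moreover have "y1 + s*(y2-y1) > y1" using \<open>y2>y1\<close> s by simp
    ultimately have "(x1 + s*(x2-x1)) / (y1 + s*(y2-y1)) < x1/y1"
      using assms s by (simp add: frac_less)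
    hence "G (x1/y1) < g" unfolding g_def using G_strict s(3,4) by simp
    have e: "G (x1/y1) * (x2 - x1) + (y2 - y1) = (G (x1/y1) - g) * (x2 - x1)" using dy by (simp add: algebra_simps)
    have "(G (x1/y1) - g) * (x2 - x1) > 0" using \<open>G (x1/y1) < g\<close> 2 by (simp add: mult_neg_neg)
    then show ?thesis using e by simp
  qed
qed

lemma F_mono:
  assumes "x1 > 0" "y1 > 0" "x1 \<le> x2" "y1 \<le> y2"
  shows "F x1 y1 \<le> F x2 y2"
  using F_mono_strict[OF assms] assms by (cases "x1 < x2 \<or> y1 < y2") auto

lemma ray_cont:
  assumes "r > 0" "t > 0" shows "isCont (\<lambda>t. F (r*t) t) t"
proof -
  have "((\<lambda>s. F (0 + s*r) (0 + s*1)) has_real_derivative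
          (Fx (0 + t*r) (0 + t*1) * r + Fy (0 + t*r) (0 + t*1) * 1)) (at t)"
    by (rule seg_deriv) (use assms in simp_all)
  hence "isCont (\<lambda>s. F (0 + s*r) (0 + s*1)) t" by (rule DERIV_isCont)
  thus ?thesis by (simp add: mult.commute)
qed

lemma ray_unique:
  assumes "r > 0" "t > 0" "t' > 0" "F (r*t) t = F (r*t') t'"
  shows "t = t'"
proof (rule ccontr)
  assume "t \<noteq> t'"
  then consider "t < t'" | "t' < t" by linarith
  then show False
  proof cases
    case 1
    have "F (r*t) t < F (r*t') t'" by (rule F_mono_strict) (use assms 1 in auto)
    then show False using assms by simp
  next
    case 2
    have "F (r*t') t' < F (r*t) t" by (rule F_mono_strict) (use assms 2 in auto)
    then show False using assms by simp
  qed
qed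

lemma ray_exists:
  assumes "r > 0" shows "\<exists>t>0. F (r*t) t = F 1 1"
proof (cases "r \<le> 1")
  case True
  have a: "F (r*1) 1 \<le> F 1 1" by (rule F_mono) (use assms True in auto)
  have b: "F 1 1 \<le> F (r*(1/r)) (1/r)" using assms True by (intro F_mono) (auto simp: field_simps)
  have "1 \<le> 1/r" using assms True by (simp add: field_simps)
  moreover have "\<forall>x. 1 \<le> x \<and> x \<le> 1/r \<longrightarrow> isCont (\<lambda>t. F (r*t) t) x"
    using ray_cont[OF assms] by simp
  ultimately obtain t where "1 \<le> t" "t \<le> 1/r" "F (r*t) t = F 1 1"
    using IVT[of "\<lambda>t. F (r*t) t" 1 "F 1 1" "1/r", OF a b] by blast
  then show ?thesis by (intro exI[of _ t]) auto
next
  case False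
  have a: "F (r*(1/r)) (1/r) \<le> F 1 1" using assms False by (intro F_mono) (auto simp: field_simps)
  have b: "F 1 1 \<le> F (r*1) 1" by (rule F_mono) (use assms False in auto)
  have "1/r \<le> 1" using assms False by (simp add: field_simps)
  moreover have "\<forall>x. 1/r \<le> x \<and> x \<le> 1 \<longrightarrow> isCont (\<lambda>t. F (r*t) t) x"
  proof (intro allI impI)
    fix x assume "1/r \<le> x \<and> x \<le> 1"
    moreover have "0 < 1/r" using assms by simp
    ultimately have "0 < x" by linarith
    then show "isCont (\<lambda>t. F (r*t) t) x" using ray_cont[OF assms] by blast
  qed
  ultimately obtain t where "1/r \<le> t" "t \<le> 1" "F (r*t) t = F 1 1"
    using IVT[of "\<lambda>t. F (r*t) t" "1/r" "F 1 1" 1, OF a b] by blast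
  then show ?thesis using assms by (intro exI[of _ t]) (auto simp: less_le_trans[of 0 "1/r" t])
qed

definition psi where "psi r = (SOME t. t > 0 \<and> F (r*t) t = F 1 1)"

lemma psi: assumes "r > 0" shows "psi r > 0" "F (r * psi r) (psi r) = F 1 1"
  using someI_ex[OF ray_exists[OF assms]] unfolding psi_def by auto

lemma psi_mono:
  assumes "0 < r" "r < r'"
  shows "psi r' < psi r" "r * psi r < r' * psi r'"
proof -
  have p: "psi r > 0" "psi r' > 0" "F (r * psi r) (psi r) = F 1 1" "F (r' * psi r') (psi r') = F 1 1"
    using psi assms by auto
  show 1: "psi r' < psi r"
  proof (rule ccontr)
    assume "\<not> psi r' < psi r"
    hence "psi r \<le> psi r'" by simp
    have "r * psi r < r' * psi r" using assms p by simp
    also have "\<dots> \<le> r' * psi r'" using assms \<open>psi r \<le> psi r'\<close> by simp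
    finally have "r * psi r < r' * psi r'" .
    hence "F (r * psi r) (psi r) < F (r' * psi r') (psi r')"
      using p assms \<open>psi r \<le> psi r'\<close> by (intro F_mono_strict) auto
    then show False using p by simp
  qed
  show "r * psi r < r' * psi r'"
  proof (rule ccontr)
    assume "\<not> r * psi r < r' * psi r'"
    hence "r' * psi r' \<le> r * psi r" by simp
    hence "F (r' * psi r') (psi r') < F (r * psi r) (psi r)"
      using p assms 1 by (intro F_mono_strict) auto
    then show False using p by simp
  qed
qed

lemma psi_bound:
  assumes "r > 0" "x > 0"
  shows "\<bar>psi x - psi r\<bar> \<le> psi r * \<bar>x - r\<bar> / x"
proof -
  consider "x < r" | "x = r" | "r < x" by linarith
  then show ?thesis
  proof cases
    case 1
    have a: "psi r < psi x" "x * psi x < r * psi r" using psi_mono[OF assms(2) 1] by auto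
    have "x * (psi x - psi r) < psi r * (r - x)" using a by (simp add: algebra_simps)
    hence "psi x - psi r < psi r * (r - x) / x" using assms by (simp add: field_simps)
    then show ?thesis using a 1 by simp
  next
    case 2 then show ?thesis by simp
  next
    case 3
    have a: "psi x < psi r" "r * psi r < x * psi x" using psi_mono[OF assms(1) 3] by auto
    have "x * (psi r - psi x) < psi r * (x - r)" using a by (simp add: algebra_simps)
    hence "psi r - psi x < psi r * (x - r) / x" using assms by (simp add: field_simps)
    then show ?thesis using a 3 by simp
  qed
qed

lemma psi_cont: assumes "r > 0" shows "isCont psi r"
proof -
  have ev: "eventually (\<lambda>x. 0 < x) (at r)"
    using order_tendstoD(1)[OF tendsto_ident_at assms] .
  have lim: "((\<lambda>x. psi r * \<bar>x - r\<bar> / x) \<longlongrightarrow> psi r * \<bar>r - r\<bar> / r) (at r)"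
    using assms by (intro tendsto_intros) auto
  have "((\<lambda>x. psi x - psi r) \<longlongrightarrow> 0) (at r)"
  proof (rule Lim_null_comparison[OF _ ])
    show "eventually (\<lambda>x. norm (psi x - psi r) \<le> psi r * \<bar>x - r\<bar> / x) (at r)"
      using ev by eventually_elim (use psi_bound assms in auto)
    show "((\<lambda>x. psi r * \<bar>x - r\<bar> / x) \<longlongrightarrow> 0) (at r)" using lim by simp
  qed
  then show ?thesis unfolding isCont_def using LIM_zero_iff by blast
qed

lemma G_less_iff: assumes "0 < u" "0 < v" shows "G u < G v \<longleftrightarrow> v < u"
proof
  assume a: "G u < G v"
  show "v < u"
  proof (rule ccontr)
    assume "\<not> v < u"
    then have "u = v \<or> u < v" by linarith
    then show False using G_strict[OF assms(1), of v] a by auto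
  qed
next
  assume "v < u" then show "G u < G v" using G_strict[OF assms(2)] by simp
qed

lemma G_inj: "inj_on G {0<..}"
proof (rule inj_onI)
  fix x y assume xy: "x \<in> {0<..}" "y \<in> {0<..}" "G x = G y"
  show "x = y"
  proof (rule ccontr)
    assume "x \<noteq> y"
    then have "x < y \<or> y < x" by linarith
    then show False using G_strict xy by fastforce
  qed
qed

lemma G_surj: assumes "c > 0" shows "\<exists>z>0. G z = c"
proof -
  have "eventually (\<lambda>x. c + 1 \<le> G x) (at_right 0)"
    using Glim0 unfolding filterlim_at_top by blast
  then obtain b where b: "b > 0" "\<And>y. 0 < y \<Longrightarrow> y < b \<Longrightarrow> c + 1 \<le> G y"
    unfolding eventually_at_right_field by auto
  define z0 where "z0 = b/2"
  have z0: "z0 > 0" "c \<le> G z0" using b(1) b(2)[of z0] unfolding z0_def by auto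
  have "eventually (\<lambda>x. G x < c) at_top" using order_tendstoD(2)[OF Gliminf assms] .
  then obtain N where N: "\<And>n. n \<ge> N \<Longrightarrow> G n < c" unfolding eventually_at_top_linorder by auto
  define z1 where "z1 = max N (z0 + 1)"
  have z1: "z0 \<le> z1" "G z1 \<le> c" using N[of z1] unfolding z1_def by auto
  have "\<forall>x. z0 \<le> x \<and> x \<le> z1 \<longrightarrow> isCont G x"
  proof (intro allI impI)
    fix x assume "z0 \<le> x \<and> x \<le> z1"
    hence "x > 0" using z0 by linarith
    thus "isCont G x" by (rule G_cont)
  qed
  then obtain z where "z0 \<le> z" "z \<le> z1" "G z = c" using IVT2[OF z1(2) z0(2) z1(1)] by blast
  then show ?thesis using z0 by (intro exI[of _ z]) auto
qed

lemma Ginv: assumes "c > 0" shows "Ginv G c > 0" "G (Ginv G c) = c"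
proof -
  obtain z where "z > 0" "G z = c" using G_surj[OF assms] by blast
  hence "c \<in> G ` {0<..}" by auto
  then show "Ginv G c > 0" "G (Ginv G c) = c"
    using inv_into_into[of c G "{0<..}"] f_inv_into_f[of c G "{0<..}"] by (auto simp: Ginv_def)
qed

lemma Ginv_G: "z > 0 \<Longrightarrow> Ginv G (G z) = z"
  unfolding Ginv_def using inv_into_f_f[OF G_inj] by simp

lemma Ginv_strict: assumes "0 < c" "c < d" shows "Ginv G d < Ginv G c"
  using Ginv[of c] Ginv[of d] assms G_less_iff[of "Ginv G c" "Ginv G d"] by auto

lemma Ginv_cont: assumes "c > 0" shows "isCont (Ginv G) c"
proof -
  let ?x = "Ginv G c"
  have x: "?x > 0" "G ?x = c" using Ginv[OF assms] by auto
  have "isCont (Ginv G) (G ?x)"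
  proof (rule isCont_inverse_function[where f=G and g="Ginv G" and x="?x" and d="?x/2"])
    show "0 < ?x/2" using x by simp
  next
    fix z assume "\<bar>z - ?x\<bar> \<le> ?x/2"
    hence "z > 0" using x by linarith
    then show "Ginv G (G z) = z" using Ginv_G by auto
  next
    fix z assume "\<bar>z - ?x\<bar> \<le> ?x/2"
    hence "z > 0" using x by linarith
    then show "isCont G z" using G_cont by auto
  qed
  then show ?thesis using x by simp
qed

lemma ray_level:
  assumes "r > 0" "\<beta> > 0"
  shows "F (r * (psi r / psi \<beta>)) (psi r / psi \<beta>) = F \<beta> 1"
proof -
  have p: "psi r > 0" "psi \<beta> > 0" using psi assms by auto
  have "F ((1/psi \<beta>) * (r * psi r)) ((1/psi \<beta>) * psi r) = F ((1/psi \<beta>) * (\<beta> * psi \<beta>)) ((1/psi \<beta>) * psi \<beta>)"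
    using p assms psi(2)[of r] psi(2)[of \<beta>] by (intro hom) auto
  then show ?thesis using p by simp
qed

definition Rf where "Rf f \<alpha> \<beta> = min (Ginv G (\<alpha>/(1+f))) (max (Ginv G (\<alpha>*(1+f))) \<beta>)"
definition pA where "pA f \<alpha> \<beta> = 1 - Rf f \<alpha> \<beta> * psi (Rf f \<alpha> \<beta>) / (\<beta> * psi \<beta>)"
definition pB where "pB f \<alpha> \<beta> = 1 - psi (Rf f \<alpha> \<beta>) / psi \<beta>"

lemma Ginv_order:
  assumes "f > 0" "\<alpha> > 0"
  shows "Ginv G (\<alpha>*(1+f)) < Ginv G (\<alpha>/(1+f))"
proof (rule Ginv_strict)
  show "0 < \<alpha>/(1+f)" using assms by simp
  have "\<alpha>/(1+f) < \<alpha>" using assms by (simp add: field_simps)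
  also have "\<alpha> < \<alpha>*(1+f)" using assms by simp
  finally show "\<alpha>/(1+f) < \<alpha>*(1+f)" .
qed

lemma reg1:
  assumes "f > 0" "\<alpha> > 0" "\<beta> > 0" "G \<beta> / \<alpha> < 1/(1+f)"
  shows "Rf f \<alpha> \<beta> = Ginv G (\<alpha>/(1+f))" "Ginv G (\<alpha>/(1+f)) < \<beta>"
proof -
  have c: "\<alpha>/(1+f) > 0" using assms by simp
  have "G \<beta> < \<alpha>/(1+f)" using assms(4) assms by (simp add: field_simps)
  then show *: "Ginv G (\<alpha>/(1+f)) < \<beta>" using G_less_iff[of \<beta> "Ginv G (\<alpha>/(1+f))"] Ginv[OF c] assms by simp
  then show "Rf f \<alpha> \<beta> = Ginv G (\<alpha>/(1+f))" unfolding Rf_def using Ginv_order[OF assms(1,2)] by simp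
qed

lemma reg2:
  assumes "f > 0" "\<alpha> > 0" "\<beta> > 0" "G \<beta> / \<alpha> > 1+f"
  shows "Rf f \<alpha> \<beta> = Ginv G (\<alpha>*(1+f))" "\<beta> < Ginv G (\<alpha>*(1+f))"
proof -
  have c: "\<alpha>*(1+f) > 0" using assms by simp
  have "G \<beta> > \<alpha>*(1+f)" using assms(4) assms by (simp add: field_simps)
  then show *: "\<beta> < Ginv G (\<alpha>*(1+f))" using G_less_iff[of "Ginv G (\<alpha>*(1+f))" \<beta>] Ginv[OF c] assms by simp
  then show "Rf f \<alpha> \<beta> = Ginv G (\<alpha>*(1+f))" unfolding Rf_def using Ginv_order[OF assms(1,2)] by simp
qed

lemma reg0:
  assumes "f > 0" "\<alpha> > 0" "\<beta> > 0" "no_trade G f \<alpha> \<beta>"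
  shows "Rf f \<alpha> \<beta> = \<beta>"
proof -
  have c1: "\<alpha>/(1+f) > 0" and c2: "\<alpha>*(1+f) > 0" using assms by auto
  have "\<alpha>/(1+f) \<le> G \<beta>" "G \<beta> \<le> \<alpha>*(1+f)" using assms(4) assms unfolding no_trade_def
    by (simp_all add: field_simps)
  hence "G (Ginv G (\<alpha>/(1+f))) \<le> G \<beta>" "G \<beta> \<le> G (Ginv G (\<alpha>*(1+f)))" using Ginv[OF c1] Ginv[OF c2] by auto
  hence "\<beta> \<le> Ginv G (\<alpha>/(1+f))" "Ginv G (\<alpha>*(1+f)) \<le> \<beta>"
    using G_less_iff[of \<beta> "Ginv G (\<alpha>/(1+f))"] G_less_iff[of "Ginv G (\<alpha>*(1+f))" \<beta>] Ginv[OF c1] Ginv[OF c2] assms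
    by (auto simp: not_less[symmetric])
  then show ?thesis unfolding Rf_def by simp
qed

lemma Rf_pos: assumes "f > 0" "\<alpha> > 0" "\<beta> > 0" shows "Rf f \<alpha> \<beta> > 0"
  using Ginv[of "\<alpha>/(1+f)"] Ginv[of "\<alpha>*(1+f)"] assms unfolding Rf_def by auto

lemma sys_sol:
  assumes "c > 0" "\<beta> > 0"
  shows "phi_sys F G c \<beta> (1 - Ginv G c * psi (Ginv G c) / (\<beta> * psi \<beta>)) (1 - psi (Ginv G c) / psi \<beta>)"
proof -
  let ?r = "Ginv G c"
  have r: "?r > 0" using Ginv[OF assms(1)] by simp
  have p: "psi ?r > 0" "psi \<beta> > 0" using psi r assms by auto
  have "F (\<beta> * (?r * psi ?r / (\<beta> * psi \<beta>))) (psi ?r / psi \<beta>) = F (?r * (psi ?r / psi \<beta>)) (psi ?r / psi \<beta>)"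
    using assms by simp
  also have "\<dots> = F \<beta> 1" by (rule ray_level[OF r assms(2)])
  finally show ?thesis unfolding phi_sys_def using p assms by (simp add: field_simps)
qed

lemma sys_uniq:
  assumes "c > 0" "\<beta> > 0" "phi_sys F G c \<beta> dA dB" "1 - dB > 0"
  shows "dB = 1 - psi (Ginv G c) / psi \<beta>" "dA = 1 - Ginv G c * psi (Ginv G c) / (\<beta> * psi \<beta>)"
proof -
  let ?r = "Ginv G c"
  have r: "?r > 0" using Ginv[OF assms(1)] by simp
  have p: "psi ?r > 0" "psi \<beta> > 0" using psi r assms by auto
  have e1: "(1 - dA) / (1 - dB) = (1/\<beta>) * ?r" and e2: "F (\<beta> * (1 - dA)) (1 - dB) = F \<beta> 1"
    using assms(3) unfolding phi_sys_def by auto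
  have dA: "\<beta> * (1 - dA) = ?r * (1 - dB)" using e1 assms(2,4) by (simp add: field_simps)
  have "F (?r * (1 - dB)) (1 - dB) = F (?r * (psi ?r / psi \<beta>)) (psi ?r / psi \<beta>)"
    using e2 dA ray_level[OF r assms(2)] by simp
  hence t: "1 - dB = psi ?r / psi \<beta>" using ray_unique[OF r assms(4)] p by simp
  then show "dB = 1 - psi (Ginv G c) / psi \<beta>" by simp
  have e: "\<beta> * (1 - dA) = ?r * (psi ?r / psi \<beta>)" using dA t by simp
  have "1 - dA = (\<beta> * (1 - dA)) / \<beta>" using assms(2) by simp
  also have "\<dots> = (?r * (psi ?r / psi \<beta>)) / \<beta>" using e by simp
  also have "\<dots> = ?r * psi ?r / (\<beta> * psi \<beta>)" by simp
  finally show "dA = 1 - Ginv G c * psi (Ginv G c) / (\<beta> * psi \<beta>)" by linarith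
qed


lemma sign_lt:
  assumes "0 < r" "r < \<beta>"
  shows "0 < 1 - r * psi r / (\<beta> * psi \<beta>)" "1 - r * psi r / (\<beta> * psi \<beta>) < 1" "1 - psi r / psi \<beta> < 0"
proof -
  have p: "psi r > 0" "psi \<beta> > 0" using psi assms by auto
  have m: "psi \<beta> < psi r" "r * psi r < \<beta> * psi \<beta>" using psi_mono[OF assms] by auto
  show "0 < 1 - r * psi r / (\<beta> * psi \<beta>)" using m p assms by (simp add: field_simps)
  show "1 - r * psi r / (\<beta> * psi \<beta>) < 1" using m p assms by (simp add: field_simps)
  show "1 - psi r / psi \<beta> < 0" using m p by (simp add: field_simps)
qed

lemma sign_gt:
  assumes "0 < \<beta>" "\<beta> < r"
  shows "1 - r * psi r / (\<beta> * psi \<beta>) < 0" "0 < 1 - psi r / psi \<beta>" "1 - psi r / psi \<beta> < 1"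
proof -
  have p: "psi r > 0" "psi \<beta> > 0" using psi assms by auto
  have m: "psi r < psi \<beta>" "\<beta> * psi \<beta> < r * psi r" using psi_mono[OF assms] by auto
  show "1 - r * psi r / (\<beta> * psi \<beta>) < 0" using m p assms by (simp add: field_simps)
  show "0 < 1 - psi r / psi \<beta>" using m p by (simp add: field_simps)
  show "1 - psi r / psi \<beta> < 1" using m p by (simp add: field_simps)
qed

lemma ex1_reg1:
  assumes "f > 0" "\<alpha> > 0" "\<beta> > 0" "G \<beta> / \<alpha> < 1/(1+f)"
  defines "Q \<equiv> \<lambda>p. 0 < fst p \<and> fst p < 1 \<and> snd p < 0 \<and> phi_sys F G (\<alpha> / (1 + f)) \<beta> (fst p) (snd p)"
  shows "(\<exists>!p. Q p) \<and> (THE p. Q p) = (pA f \<alpha> \<beta>, pB f \<alpha> \<beta>)"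
proof -
  let ?c = "\<alpha>/(1+f)"
  let ?r = "Ginv G ?c"
  have c: "?c > 0" using assms by simp
  have R: "Rf f \<alpha> \<beta> = ?r" "?r < \<beta>" using reg1[OF assms(1-4)] by auto
  have r: "?r > 0" using Ginv[OF c] by simp
  have Q0: "Q (pA f \<alpha> \<beta>, pB f \<alpha> \<beta>)"
    unfolding Q_def pA_def pB_def R(1) fst_conv snd_conv using sign_lt[OF r R(2)] sys_sol[OF c assms(3)] by blast
  have U: "p = (pA f \<alpha> \<beta>, pB f \<alpha> \<beta>)" if "Q p" for p
  proof -
    have "phi_sys F G ?c \<beta> (fst p) (snd p)" "1 - snd p > 0" using that unfolding Q_def by auto
    from sys_uniq[OF c assms(3) this] show ?thesis unfolding pA_def pB_def R(1)
      by (metis prod.collapse)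
  qed
  have "\<exists>!p. Q p" by (rule ex1I[of Q "(pA f \<alpha> \<beta>, pB f \<alpha> \<beta>)", OF Q0 U])
  moreover have "(THE p. Q p) = (pA f \<alpha> \<beta>, pB f \<alpha> \<beta>)" by (rule the_equality[of Q, OF Q0 U])
  ultimately show ?thesis by simp
qed

lemma ex1_reg2:
  assumes "f > 0" "\<alpha> > 0" "\<beta> > 0" "G \<beta> / \<alpha> > 1+f"
  defines "Q \<equiv> \<lambda>p. fst p < 0 \<and> 0 < snd p \<and> snd p < 1 \<and> phi_sys F G (\<alpha> * (1 + f)) \<beta> (fst p) (snd p)"
  shows "(\<exists>!p. Q p) \<and> (THE p. Q p) = (pA f \<alpha> \<beta>, pB f \<alpha> \<beta>)"
proof -
  let ?c = "\<alpha>*(1+f)"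
  let ?r = "Ginv G ?c"
  have c: "?c > 0" using assms by simp
  have R: "Rf f \<alpha> \<beta> = ?r" "\<beta> < ?r" using reg2[OF assms(1-4)] by auto
  have r: "?r > 0" using Ginv[OF c] by simp
  have Q0: "Q (pA f \<alpha> \<beta>, pB f \<alpha> \<beta>)"
    unfolding Q_def pA_def pB_def R(1) fst_conv snd_conv using sign_gt[OF assms(3) R(2)] sys_sol[OF c assms(3)] by blast
  have U: "p = (pA f \<alpha> \<beta>, pB f \<alpha> \<beta>)" if "Q p" for p
  proof -
    have "phi_sys F G ?c \<beta> (fst p) (snd p)" "1 - snd p > 0" using that unfolding Q_def by auto
    from sys_uniq[OF c assms(3) this] show ?thesis unfolding pA_def pB_def R(1)
      by (metis prod.collapse)
  qed
  have "\<exists>!p. Q p" by (rule ex1I[of Q "(pA f \<alpha> \<beta>, pB f \<alpha> \<beta>)", OF Q0 U])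
  moreover have "(THE p. Q p) = (pA f \<alpha> \<beta>, pB f \<alpha> \<beta>)" by (rule the_equality[of Q, OF Q0 U])
  ultimately show ?thesis by simp
qed

lemma phi_eq:
  assumes "f > 0" "\<alpha> > 0" "\<beta> > 0"
  shows "phi F G f \<alpha> \<beta> = (pA f \<alpha> \<beta>, pB f \<alpha> \<beta>)"
proof -
  consider "G \<beta> / \<alpha> < 1/(1+f)" | "\<not> G \<beta> / \<alpha> < 1/(1+f)" "G \<beta> / \<alpha> > 1+f" | "no_trade G f \<alpha> \<beta>"
    unfolding no_trade_def by linarith
  then show ?thesis
  proof cases
    case 1 then show ?thesis using ex1_reg1[OF assms 1] unfolding phi_def by simp
  next
    case 2 then show ?thesis using ex1_reg2[OF assms 2(2)] unfolding phi_def by simp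
  next
    case 3
    have "Rf f \<alpha> \<beta> = \<beta>" by (rule reg0[OF assms 3])
    moreover have "psi \<beta> > 0" using psi assms by simp
    ultimately have "pA f \<alpha> \<beta> = 0" "pB f \<alpha> \<beta> = 0" unfolding pA_def pB_def using assms by auto
    moreover have "\<not> G \<beta> / \<alpha> < 1/(1+f)" "\<not> G \<beta> / \<alpha> > 1+f" using 3 unfolding no_trade_def by auto
    ultimately show ?thesis unfolding phi_def by simp
  qed
qed

lemma phiA_eq: "f > 0 \<Longrightarrow> \<alpha> > 0 \<Longrightarrow> \<beta> > 0 \<Longrightarrow> phiA F G f \<alpha> \<beta> = pA f \<alpha> \<beta>"
  unfolding phiA_def using phi_eq by simp
lemma phiB_eq: "f > 0 \<Longrightarrow> \<alpha> > 0 \<Longrightarrow> \<beta> > 0 \<Longrightarrow> phiB F G f \<alpha> \<beta> = pB f \<alpha> \<beta>"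
  unfolding phiB_def using phi_eq by simp

lemma psi_cont_on: "continuous_on {0<..} psi"
  by (rule continuous_at_imp_continuous_on) (auto intro: psi_cont)

lemma Ginv_cont_on: "continuous_on {0<..} (Ginv G)"
  by (rule continuous_at_imp_continuous_on) (auto intro: Ginv_cont)

lemma conts:
  assumes "f > 0"
  defines "S \<equiv> {p :: real \<times> real. fst p > 0 \<and> snd p > 0}"
  shows "continuous_on S (\<lambda>p. pA f (fst p) (snd p))" "continuous_on S (\<lambda>p. pB f (fst p) (snd p))"
proof -
  have g1: "continuous_on S (\<lambda>p. Ginv G (fst p/(1+f)))"
    by (rule continuous_on_compose2[OF Ginv_cont_on]) (use assms in \<open>auto intro!: continuous_intros\<close>)
  have g2: "continuous_on S (\<lambda>p. Ginv G (fst p*(1+f)))"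
    by (rule continuous_on_compose2[OF Ginv_cont_on]) (use assms in \<open>auto intro!: continuous_intros\<close>)
  have R: "continuous_on S (\<lambda>p. Rf f (fst p) (snd p))" unfolding Rf_def
    by (intro continuous_on_min continuous_on_max g1 g2 continuous_intros)
  have Rpos: "\<And>p. p \<in> S \<Longrightarrow> Rf f (fst p) (snd p) > 0" using Rf_pos assms by auto
  have pR: "continuous_on S (\<lambda>p. psi (Rf f (fst p) (snd p)))"
    by (rule continuous_on_compose2[OF psi_cont_on R]) (use Rpos in auto)
  have pb: "continuous_on S (\<lambda>p. psi (snd p))"
    by (rule continuous_on_compose2[OF psi_cont_on]) (auto simp: S_def intro!: continuous_intros)
  have nz: "\<And>p. p \<in> S \<Longrightarrow> psi (snd p) \<noteq> 0" using psi unfolding S_def by (metis less_irrefl mem_Collect_eq)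
  have nz2: "\<And>p. p \<in> S \<Longrightarrow> snd p * psi (snd p) \<noteq> 0" using nz unfolding S_def by auto
  show "continuous_on S (\<lambda>p. pA f (fst p) (snd p))" unfolding pA_def
    by (intro continuous_intros R pR pb) (use nz2 in auto)
  show "continuous_on S (\<lambda>p. pB f (fst p) (snd p))" unfolding pB_def
    by (intro continuous_intros R pR pb) (use nz in auto)
qed

lemma cont_phi:
  assumes "f > 0"
  shows "continuous_on {p :: real \<times> real. fst p > 0 \<and> snd p > 0} (\<lambda>(\<alpha>, \<beta>). phiA F G f \<alpha> \<beta>)"
    "continuous_on {p :: real \<times> real. fst p > 0 \<and> snd p > 0} (\<lambda>(\<alpha>, \<beta>). phiB F G f \<alpha> \<beta>)"
proof -
  show "continuous_on {p :: real \<times> real. fst p > 0 \<and> snd p > 0} (\<lambda>(\<alpha>, \<beta>). phiA F G f \<alpha> \<beta>)"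
    by (rule continuous_on_eq[OF conts(1)[OF assms]]) (auto simp: phiA_eq assms)
  show "continuous_on {p :: real \<times> real. fst p > 0 \<and> snd p > 0} (\<lambda>(\<alpha>, \<beta>). phiB F G f \<alpha> \<beta>)"
    by (rule continuous_on_eq[OF conts(2)[OF assms]]) (auto simp: phiB_eq assms)
qed


lemma not_nt: "\<not> no_trade G f \<alpha> \<beta> \<longleftrightarrow> G \<beta> / \<alpha> < 1/(1+f) \<or> G \<beta> / \<alpha> > 1+f"
  unfolding no_trade_def by linarith

lemma Rf_anti:
  assumes "f > 0" "\<beta> > 0" "0 < \<alpha>1" "\<alpha>1 < \<alpha>2" "\<not> no_trade G f \<alpha>1 \<beta>" "\<not> no_trade G f \<alpha>2 \<beta>"
  shows "Rf f \<alpha>2 \<beta> < Rf f \<alpha>1 \<beta>"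
proof -
  have a2: "\<alpha>2 > 0" using assms by simp
  have q: "G \<beta> / \<alpha>2 < G \<beta> / \<alpha>1" using Gpos[OF assms(2)] assms by (simp add: divide_strict_left_mono)
  consider "G \<beta> / \<alpha>1 < 1/(1+f)" "G \<beta> / \<alpha>2 < 1/(1+f)" | "G \<beta> / \<alpha>1 > 1+f" "G \<beta> / \<alpha>2 > 1+f"
    | "G \<beta> / \<alpha>1 > 1+f" "G \<beta> / \<alpha>2 < 1/(1+f)" | "G \<beta> / \<alpha>1 < 1/(1+f)" "G \<beta> / \<alpha>2 > 1+f"
    using assms(5,6) unfolding not_nt by blast
  then show ?thesis
  proof cases
    case 1
    have "\<alpha>1/(1+f) < \<alpha>2/(1+f)" using assms by (simp add: divide_strict_right_mono)
    then show ?thesis using reg1[OF assms(1) assms(3) assms(2) 1(1)] reg1[OF assms(1) a2 assms(2) 1(2)]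
      Ginv_strict[of "\<alpha>1/(1+f)" "\<alpha>2/(1+f)"] assms by simp
  next
    case 2
    have "\<alpha>1*(1+f) < \<alpha>2*(1+f)" using assms by simp
    then show ?thesis using reg2[OF assms(1) assms(3) assms(2) 2(1)] reg2[OF assms(1) a2 assms(2) 2(2)]
      Ginv_strict[of "\<alpha>1*(1+f)" "\<alpha>2*(1+f)"] assms by simp
  next
    case 3
    then show ?thesis using reg2[OF assms(1) assms(3) assms(2) 3(1)] reg1[OF assms(1) a2 assms(2) 3(2)] by simp
  next
    case 4
    have "1/(1+f) < 1" using assms(1) by (simp add: field_simps)
    hence "1/(1+f) < 1+f" using assms(1) by linarith
    then show ?thesis using 4 q by linarith
  qed
qed

lemma mono_alpha:
  assumes "f > 0" "\<beta> > 0" "0 < \<alpha>1" "\<alpha>1 < \<alpha>2" "\<not> no_trade G f \<alpha>1 \<beta>" "\<not> no_trade G f \<alpha>2 \<beta>"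
  shows "phiA F G f \<alpha>1 \<beta> < phiA F G f \<alpha>2 \<beta> \<and> phiB F G f \<alpha>2 \<beta> < phiB F G f \<alpha>1 \<beta>"
proof -
  have a2: "\<alpha>2 > 0" using assms by simp
  let ?R1 = "Rf f \<alpha>1 \<beta>" and ?R2 = "Rf f \<alpha>2 \<beta>"
  have R2: "?R2 > 0" using Rf_pos[OF assms(1) a2 assms(2)] .
  have m: "psi ?R1 < psi ?R2" "?R2 * psi ?R2 < ?R1 * psi ?R1" using psi_mono[OF R2 Rf_anti[OF assms]] by auto
  have pb: "psi \<beta> > 0" using psi assms by simp
  have "?R2 * psi ?R2 / (\<beta> * psi \<beta>) < ?R1 * psi ?R1 / (\<beta> * psi \<beta>)"
    using m pb assms by (simp add: divide_strict_right_mono)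
  moreover have "psi ?R1 / psi \<beta> < psi ?R2 / psi \<beta>" using m pb by (simp add: divide_strict_right_mono)
  ultimately show ?thesis using phiA_eq phiB_eq assms a2 unfolding pA_def pB_def by simp
qed

lemma mono_beta:
  assumes "f > 0" "\<alpha> > 0" "0 < \<beta>1" "\<beta>1 < \<beta>2" "\<not> no_trade G f \<alpha> \<beta>1" "\<not> no_trade G f \<alpha> \<beta>2"
  shows "phiA F G f \<alpha> \<beta>1 < phiA F G f \<alpha> \<beta>2 \<and> phiB F G f \<alpha> \<beta>2 < phiB F G f \<alpha> \<beta>1"
proof -
  have b2: "\<beta>2 > 0" using assms by simp
  have e1: "phiA F G f \<alpha> \<beta>1 = pA f \<alpha> \<beta>1" "phiB F G f \<alpha> \<beta>1 = pB f \<alpha> \<beta>1"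
    using phiA_eq phiB_eq assms by auto
  have e2: "phiA F G f \<alpha> \<beta>2 = pA f \<alpha> \<beta>2" "phiB F G f \<alpha> \<beta>2 = pB f \<alpha> \<beta>2"
    using phiA_eq phiB_eq assms b2 by auto
  have pb: "psi \<beta>1 > 0" "psi \<beta>2 > 0" using psi assms b2 by auto
  have mb: "psi \<beta>2 < psi \<beta>1" "\<beta>1 * psi \<beta>1 < \<beta>2 * psi \<beta>2" using psi_mono[OF assms(3,4)] by auto
  have fixr: "pA f \<alpha> \<beta>1 < pA f \<alpha> \<beta>2 \<and> pB f \<alpha> \<beta>2 < pB f \<alpha> \<beta>1"
    if "Rf f \<alpha> \<beta>1 = r" "Rf f \<alpha> \<beta>2 = r" "r > 0" for r
  proof -
    have pr: "psi r > 0" using psi that by simp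
    have "r * psi r / (\<beta>2 * psi \<beta>2) < r * psi r / (\<beta>1 * psi \<beta>1)"
      using mb pb pr that assms by (intro divide_strict_left_mono) auto
    moreover have "psi r / psi \<beta>1 < psi r / psi \<beta>2"
      using mb pb pr by (intro divide_strict_left_mono) auto
    ultimately show ?thesis unfolding pA_def pB_def that by simp
  qed
  have q: "G \<beta>2 / \<alpha> < G \<beta>1 / \<alpha>" using G_strict[OF assms(3,4)] assms by (simp add: divide_strict_right_mono)
  consider "G \<beta>1 / \<alpha> < 1/(1+f)" "G \<beta>2 / \<alpha> < 1/(1+f)" | "G \<beta>1 / \<alpha> > 1+f" "G \<beta>2 / \<alpha> > 1+f"
    | "G \<beta>1 / \<alpha> > 1+f" "G \<beta>2 / \<alpha> < 1/(1+f)" | "G \<beta>1 / \<alpha> < 1/(1+f)" "G \<beta>2 / \<alpha> > 1+f"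
    using assms(5,6) unfolding not_nt by blast
  then show ?thesis
  proof cases
    case 1
    have c: "\<alpha>/(1+f) > 0" using assms by simp
    show ?thesis using fixr[OF reg1(1)[OF assms(1,2,3) 1(1)] reg1(1)[OF assms(1,2) b2 1(2)]] Ginv[OF c] e1 e2 by simp
  next
    case 2
    have c: "\<alpha>*(1+f) > 0" using assms by simp
    show ?thesis using fixr[OF reg2(1)[OF assms(1,2,3) 2(1)] reg2(1)[OF assms(1,2) b2 2(2)]] Ginv[OF c] e1 e2 by simp
  next
    case 3
    have r1: "Rf f \<alpha> \<beta>1 = Ginv G (\<alpha>*(1+f))" "\<beta>1 < Ginv G (\<alpha>*(1+f))" using reg2[OF assms(1,2,3) 3(1)] by auto
    have r2: "Rf f \<alpha> \<beta>2 = Ginv G (\<alpha>/(1+f))" "Ginv G (\<alpha>/(1+f)) < \<beta>2" using reg1[OF assms(1,2) b2 3(2)] by auto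
    have c: "\<alpha>/(1+f) > 0" using assms by simp
    have s1: "pA f \<alpha> \<beta>1 < 0" "0 < pB f \<alpha> \<beta>1" unfolding pA_def pB_def r1(1) using sign_gt[OF assms(3) r1(2)] by auto
    have s2: "0 < pA f \<alpha> \<beta>2" "pB f \<alpha> \<beta>2 < 0" unfolding pA_def pB_def r2(1) using sign_lt[OF _ r2(2)] Ginv[OF c] by auto
    show ?thesis using s1 s2 e1 e2 by simp
  next
    case 4
    have "1/(1+f) < 1" using assms(1) by (simp add: field_simps)
    hence "1/(1+f) < 1+f" using assms(1) by linarith
    then show ?thesis using 4 q by linarith
  qed
qed

end


lemma wt1:
  fixes a f x :: real assumes "a > 0" "f > 0"
  shows "a*(1 + f*(if x<0 then 1 else 0))*x \<le> a*x"
proof (cases "x < 0")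
  case True
  have "(a*f)*x < 0" using True assms by (simp add: mult_pos_neg)
  moreover have "a*(1 + f*(if x<0 then 1 else 0))*x = a*x + (a*f)*x" using True by (simp add: algebra_simps)
  ultimately show ?thesis by simp
qed simp

lemma wt2:
  fixes a f x :: real assumes "a > 0" "f > 0"
  shows "a*(1 + f*(if x<0 then 1 else 0))*x \<le> a*(1+f)*x"
proof (cases "x < 0")
  case False
  have "(a*f)*x \<ge> 0" using False assms by simp
  moreover have "a*(1+f)*x = a*x + (a*f)*x" by (simp add: algebra_simps)
  ultimately show ?thesis using False by simp
qed simp

lemma obj_le1: "a > 0 \<Longrightarrow> b > 0 \<Longrightarrow> f > 0 \<Longrightarrow> trade_obj f a b x y \<le> a*x + b*(1+f)*y"
  unfolding trade_obj_def using wt1[of a f x] wt2[of b f y] by linarith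

lemma obj_le2: "a > 0 \<Longrightarrow> b > 0 \<Longrightarrow> f > 0 \<Longrightarrow> trade_obj f a b x y \<le> a*(1+f)*x + b*y"
  unfolding trade_obj_def using wt2[of a f x] wt1[of b f y] by linarith

context PP begin

lemma opt:
  assumes f: "f > 0" and pos: "yA > 0" "yB > 0" "a > 0" "b > 0"
  defines "DA \<equiv> phiA F G f (a / b) (yA / yB) * yA" and "DB \<equiv> phiB F G f (a / b) (yA / yB) * yB"
  shows "feasible F yA yB DA DB \<and>
         (\<forall>DA' DB'. feasible F yA yB DA' DB' \<and> (DA', DB') \<noteq> (DA, DB) \<longrightarrow>
            trade_obj f a b DA' DB' < trade_obj f a b DA DB)"
proof -
  define \<alpha> where "\<alpha> = a/b"
  define \<beta> where "\<beta> = yA/yB"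
  have ab: "\<alpha> > 0" "\<beta> > 0" using pos unfolding \<alpha>_def \<beta>_def by auto
  define R where "R = Rf f \<alpha> \<beta>"
  have R: "R > 0" using Rf_pos[OF f ab] R_def by simp
  define t where "t = psi R / psi \<beta>"
  have pp: "psi R > 0" "psi \<beta> > 0" using psi R ab by auto
  have t: "t > 0" using pp t_def by simp
  have DA: "DA = pA f \<alpha> \<beta> * yA" and DB: "DB = pB f \<alpha> \<beta> * yB"
    unfolding DA_def DB_def \<alpha>_def[symmetric] \<beta>_def[symmetric] using phiA_eq phiB_eq f ab by auto
  have yA: "yA = \<beta>*yB" using pos \<beta>_def by simp
  have "yA - DA = yA * (R*psi R/(\<beta>*psi \<beta>))" unfolding DA pA_def R_def[symmetric] by (simp add: algebra_simps)
  also have "\<dots> = (\<beta>*yB) * (R*psi R/(\<beta>*psi \<beta>))" using yA by simp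
  also have "\<dots> = yB * (R * t)" unfolding t_def using ab pp by (simp add: field_simps)
  finally have hX: "yA - DA = yB * (R * t)" .
  have hY: "yB - DB = yB * t"
    unfolding DB pB_def R_def[symmetric] t_def using pos pp by (simp add: field_simps)
  have Xp: "yA - DA > 0" "yB - DB > 0" using hX hY pos R t by auto
  have "F (yB * (R * t)) (yB * t) = F (yB * \<beta>) (yB * 1)"
    using ray_level[OF R ab(2)] R t ab pos pp unfolding t_def by (intro hom) auto
  moreover have "yB * \<beta> = yA" unfolding \<beta>_def using pos by simp
  ultimately have Feq: "F (yA - DA) (yB - DB) = F yA yB" using hX hY by simp
  have feas: "feasible F yA yB DA DB" unfolding feasible_def using Feq Xp by simp
  have ratio: "(yA - DA) / (yB - DB) = R" using hX hY pos t by simp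
  define g where "g = G R"
  have tan: "g * (DA - DA') + (DB - DB') > 0"
    if "feasible F yA yB DA' DB'" "(DA', DB') \<noteq> (DA, DB)" for DA' DB'
  proof -
    have q: "yA - DA' > 0" "yB - DB' > 0" "F (yA - DA) (yB - DB) = F (yA - DA') (yB - DB')"
      using that(1) Feq unfolding feasible_def by auto
    have "(yA - DA, yB - DB) \<noteq> (yA - DA', yB - DB')" using that(2) by auto
    from tangent[OF Xp q this] show ?thesis unfolding ratio g_def by simp
  qed
  have pab: "a*(1+f) > 0" "b*(1+f) > 0" "b + b*f > 0" "1 + f > 0" using pos f by (auto simp: add_pos_pos)
  consider "G \<beta> / \<alpha> < 1/(1+f)" | "G \<beta> / \<alpha> > 1+f" | "no_trade G f \<alpha> \<beta>"
    unfolding no_trade_def by linarith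
  then have main: "\<forall>DA' DB'. feasible F yA yB DA' DB' \<and> (DA', DB') \<noteq> (DA, DB) \<longrightarrow>
            trade_obj f a b DA' DB' < trade_obj f a b DA DB"
  proof cases
    case 1
    have r: "R = Ginv G (\<alpha>/(1+f))" "R < \<beta>" using reg1[OF f ab 1] R_def by auto
    have c: "\<alpha>/(1+f) > 0" using ab f by simp
    have gv: "g * (b*(1+f)) = a" unfolding g_def r(1) using Ginv(2)[OF c] pos f pab unfolding \<alpha>_def
      by (simp add: field_simps)
    have sA: "pA f \<alpha> \<beta> > 0" and sB: "pB f \<alpha> \<beta> < 0"
      unfolding pA_def pB_def R_def[symmetric] using sign_lt[OF R r(2)] by auto
    have DA0: "DA > 0" using sA pos DA by simp
    have DB0: "DB < 0" using sB pos DB by (simp add: mult_neg_pos)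
    have obj: "trade_obj f a b DA DB = a*DA + b*(1+f)*DB" unfolding trade_obj_def using DA0 DB0 by simp
    show ?thesis
    proof (intro allI impI)
      fix DA' DB' assume h: "feasible F yA yB DA' DB' \<and> (DA', DB') \<noteq> (DA, DB)"
      have "(b*(1+f)) * (g * (DA - DA') + (DB - DB')) > 0" using tan h pab by simp
      moreover have "(b*(1+f)) * (g * (DA - DA') + (DB - DB')) = (g*(b*(1+f)))*(DA-DA') + b*(1+f)*(DB-DB')"
        by (simp add: algebra_simps)
      ultimately have "a*(DA-DA') + b*(1+f)*(DB-DB') > 0" using gv by simp
      hence "a*DA' + b*(1+f)*DB' < a*DA + b*(1+f)*DB" by (simp add: algebra_simps)
      then show "trade_obj f a b DA' DB' < trade_obj f a b DA DB"
        using obj_le1[OF pos(3,4) f, of DA' DB'] obj by linarith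
    qed
  next
    case 2
    have r: "R = Ginv G (\<alpha>*(1+f))" "\<beta> < R" using reg2[OF f ab 2] R_def by auto
    have c: "\<alpha>*(1+f) > 0" using ab f by simp
    have gv: "g * b = a*(1+f)" unfolding g_def r(1) using Ginv(2)[OF c] pos f pab unfolding \<alpha>_def
      by (simp add: field_simps)
    have sA: "pA f \<alpha> \<beta> < 0" and sB: "pB f \<alpha> \<beta> > 0"
      unfolding pA_def pB_def R_def[symmetric] using sign_gt[OF ab(2) r(2)] by auto
    have DA0: "DA < 0" using sA pos DA by (simp add: mult_neg_pos)
    have DB0: "DB > 0" using sB pos DB by simp
    have obj: "trade_obj f a b DA DB = a*(1+f)*DA + b*DB" unfolding trade_obj_def using DA0 DB0 by simp
    show ?thesis
    proof (intro allI impI)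
      fix DA' DB' assume h: "feasible F yA yB DA' DB' \<and> (DA', DB') \<noteq> (DA, DB)"
      have "b * (g * (DA - DA') + (DB - DB')) > 0" using tan h pos by simp
      moreover have "b * (g * (DA - DA') + (DB - DB')) = (g*b)*(DA-DA') + b*(DB-DB')"
        by (simp add: algebra_simps)
      ultimately have "a*(1+f)*(DA-DA') + b*(DB-DB') > 0" using gv by simp
      hence "a*(1+f)*DA' + b*DB' < a*(1+f)*DA + b*DB" by (simp add: algebra_simps)
      then show "trade_obj f a b DA' DB' < trade_obj f a b DA DB"
        using obj_le2[OF pos(3,4) f, of DA' DB'] obj by linarith
    qed
  next
    case 3
    have r: "R = \<beta>" using reg0[OF f ab 3] R_def by auto
    have z: "pA f \<alpha> \<beta> = 0" "pB f \<alpha> \<beta> = 0" unfolding pA_def pB_def R_def[symmetric] r using pp ab by auto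
    have D0: "DA = 0" "DB = 0" using z DA DB by auto
    have obj: "trade_obj f a b DA DB = 0" unfolding trade_obj_def D0 by simp
    have gb: "1/(1+f) \<le> g/\<alpha>" "g/\<alpha> \<le> 1+f" using 3 unfolding no_trade_def g_def r by auto
    have g1: "a \<le> g * (b*(1+f))" using gb(1) pos f pab unfolding \<alpha>_def by (simp add: field_simps)
    have g2: "g * b \<le> a*(1+f)" using gb(2) pos f pab unfolding \<alpha>_def by (simp add: field_simps)
    show ?thesis
    proof (intro allI impI)
      fix DA' DB' assume h: "feasible F yA yB DA' DB' \<and> (DA', DB') \<noteq> (DA, DB)"
      have tn: "DB' < - g * DA'" using tan h D0 by simp
      consider "DA' > 0" | "DA' < 0" | "DA' = 0" by linarith
      then have "trade_obj f a b DA' DB' < 0"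
      proof cases
        case 1
        have "b*(1+f)*DB' < b*(1+f)*(- g * DA')" using mult_strict_left_mono[OF tn pab(2)] by simp
        moreover have "a*DA' \<le> (g*(b*(1+f)))*DA'" using g1 1 by (simp add: mult_right_mono)
        moreover have "b*(1+f)*(- g * DA') = - ((g*(b*(1+f)))*DA')" by (simp add: algebra_simps)
        ultimately show ?thesis using obj_le1[OF pos(3,4) f, of DA' DB'] by linarith
      next
        case 2
        have "b*DB' < b*(- g * DA')" using mult_strict_left_mono[OF tn pos(4)] by simp
        moreover have "a*(1+f)*DA' \<le> (g*b)*DA'" using g2 2 by (simp add: mult_right_mono_neg)
        moreover have "b*(- g * DA') = - ((g*b)*DA')" by (simp add: algebra_simps)
        ultimately show ?thesis using obj_le2[OF pos(3,4) f, of DA' DB'] by linarith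
      next
        case 3
        have "DB' < 0" using tn 3 by simp
        hence "b*(1+f)*DB' < 0" using pab by (simp add: mult_pos_neg)
        then show ?thesis using obj_le1[OF pos(3,4) f, of DA' DB'] 3 by simp
      qed
      then show "trade_obj f a b DA' DB' < trade_obj f a b DA DB" using obj by simp
    qed
  qed
  show ?thesis using feas main by blast
qed


lemma nt_zero:
  assumes "f > 0" "\<alpha> > 0" "\<beta> > 0" "no_trade G f \<alpha> \<beta>"
  shows "phiA F G f \<alpha> \<beta> = 0 \<and> phiB F G f \<alpha> \<beta> = 0"
proof -
  have "Rf f \<alpha> \<beta> = \<beta>" by (rule reg0[OF assms])
  moreover have "psi \<beta> > 0" using psi assms by simp
  ultimately show ?thesis unfolding phiA_eq[OF assms(1-3)] phiB_eq[OF assms(1-3)] pA_def pB_def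
    using assms by auto
qed

end

theorem proposition3p1:
  fixes F :: "real \<Rightarrow> real \<Rightarrow> real" and G :: "real \<Rightarrow> real" and f :: real
  assumes P: "assumption_P F G" and fpos: "f > 0"
  shows
    "(\<forall>\<alpha>>0. \<forall>\<beta>>0. G \<beta> / \<alpha> < 1 / (1 + f) \<longrightarrow>
        (\<exists>!p. 0 < fst p \<and> fst p < 1 \<and> snd p < 0 \<and> phi_sys F G (\<alpha> / (1 + f)) \<beta> (fst p) (snd p))) \<and>
     (\<forall>\<alpha>>0. \<forall>\<beta>>0. G \<beta> / \<alpha> > 1 + f \<longrightarrow>
        (\<exists>!p. fst p < 0 \<and> 0 < snd p \<and> snd p < 1 \<and> phi_sys F G (\<alpha> * (1 + f)) \<beta> (fst p) (snd p))) \<and>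
     continuous_on {p :: real \<times> real. fst p > 0 \<and> snd p > 0} (\<lambda>(\<alpha>, \<beta>). phiA F G f \<alpha> \<beta>) \<and>
     continuous_on {p :: real \<times> real. fst p > 0 \<and> snd p > 0} (\<lambda>(\<alpha>, \<beta>). phiB F G f \<alpha> \<beta>) \<and>
     (\<forall>\<alpha>>0. \<forall>\<beta>>0. no_trade G f \<alpha> \<beta> \<longrightarrow> phiA F G f \<alpha> \<beta> = 0 \<and> phiB F G f \<alpha> \<beta> = 0) \<and>
     (\<forall>\<beta>>0. \<forall>\<alpha>1>0. \<forall>\<alpha>2>0. \<not> no_trade G f \<alpha>1 \<beta> \<and> \<not> no_trade G f \<alpha>2 \<beta> \<and> \<alpha>1 < \<alpha>2 \<longrightarrow>
        phiA F G f \<alpha>1 \<beta> < phiA F G f \<alpha>2 \<beta> \<and> phiB F G f \<alpha>2 \<beta> < phiB F G f \<alpha>1 \<beta>) \<and>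
     (\<forall>\<alpha>>0. \<forall>\<beta>1>0. \<forall>\<beta>2>0. \<not> no_trade G f \<alpha> \<beta>1 \<and> \<not> no_trade G f \<alpha> \<beta>2 \<and> \<beta>1 < \<beta>2 \<longrightarrow>
        phiA F G f \<alpha> \<beta>1 < phiA F G f \<alpha> \<beta>2 \<and> phiB F G f \<alpha> \<beta>2 < phiB F G f \<alpha> \<beta>1) \<and>
     (\<forall>yA>0. \<forall>yB>0. \<forall>a>0. \<forall>b>0.
        (let DA = phiA F G f (a / b) (yA / yB) * yA; DB = phiB F G f (a / b) (yA / yB) * yB in
         feasible F yA yB DA DB \<and>
         (\<forall>DA' DB'. feasible F yA yB DA' DB' \<and> (DA', DB') \<noteq> (DA, DB) \<longrightarrow>
            trade_obj f a b DA' DB' < trade_obj f a b DA DB)))"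
proof -
  obtain Fx Fy G'' where
    c1: "\<forall>x>0. \<forall>y>0.
           ((\<lambda>(u, v). F u v) has_derivative (\<lambda>(h, k). Fx x y * h + Fy x y * k)) (at (x, y)) \<and>
           Fx x y > 0 \<and> Fy x y > 0 \<and> Fx x y / Fy x y = G (x / y)"
    and c2: "\<forall>z>0. G z > 0"
    and c3: "\<forall>z>0. (G has_real_derivative G'' z) (at z) \<and> G'' z < 0"
    and c4: "filterlim G at_top (at_right 0)"
    and c5: "(G \<longlongrightarrow> 0) at_top"
    and c6: "\<forall>x y x' y' c. x > 0 \<and> y > 0 \<and> x' > 0 \<and> y' > 0 \<and> c > 0 \<and> F x y = F x' y'
        \<longrightarrow> F (c * x) (c * y) = F (c * x') (c * y')"
    using P unfolding assumption_P_def apply (elim exE conjE) by (rule that) assumption+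
  interpret PP F G Fx Fy "\<lambda>z _. G'' z"
    apply unfold_locales
    subgoal using c1 by blast
    subgoal using c1 by blast
    subgoal using c1 by blast
    subgoal using c1 by blast
    subgoal using c2 by blast
    subgoal using c3 by blast
    subgoal using c4 by blast
    subgoal using c5 by blast
    subgoal for x y x' y' c using c6 by blast
    done
  show ?thesis
  proof (intro conjI)
    show "\<forall>\<alpha>>0. \<forall>\<beta>>0. G \<beta> / \<alpha> < 1 / (1 + f) \<longrightarrow>
        (\<exists>!p. 0 < fst p \<and> fst p < 1 \<and> snd p < 0 \<and> phi_sys F G (\<alpha> / (1 + f)) \<beta> (fst p) (snd p))"
    proof (intro allI impI)
      fix \<alpha> \<beta> :: real assume "\<alpha> > 0" "\<beta> > 0" "G \<beta> / \<alpha> < 1 / (1 + f)"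
      from ex1_reg1[OF fpos this] show "\<exists>!p. 0 < fst p \<and> fst p < 1 \<and> snd p < 0 \<and> phi_sys F G (\<alpha> / (1 + f)) \<beta> (fst p) (snd p)" by (rule conjunct1)
    qed
    show "\<forall>\<alpha>>0. \<forall>\<beta>>0. G \<beta> / \<alpha> > 1 + f \<longrightarrow>
        (\<exists>!p. fst p < 0 \<and> 0 < snd p \<and> snd p < 1 \<and> phi_sys F G (\<alpha> * (1 + f)) \<beta> (fst p) (snd p))"
    proof (intro allI impI)
      fix \<alpha> \<beta> :: real assume "\<alpha> > 0" "\<beta> > 0" "G \<beta> / \<alpha> > 1 + f"
      from ex1_reg2[OF fpos this] show "\<exists>!p. fst p < 0 \<and> 0 < snd p \<and> snd p < 1 \<and> phi_sys F G (\<alpha> * (1 + f)) \<beta> (fst p) (snd p)" by (rule conjunct1)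
    qed
    show "continuous_on {p :: real \<times> real. fst p > 0 \<and> snd p > 0} (\<lambda>(\<alpha>, \<beta>). phiA F G f \<alpha> \<beta>)"
      by (rule cont_phi(1)[OF fpos])
    show "continuous_on {p :: real \<times> real. fst p > 0 \<and> snd p > 0} (\<lambda>(\<alpha>, \<beta>). phiB F G f \<alpha> \<beta>)"
      by (rule cont_phi(2)[OF fpos])
    show "\<forall>\<alpha>>0. \<forall>\<beta>>0. no_trade G f \<alpha> \<beta> \<longrightarrow> phiA F G f \<alpha> \<beta> = 0 \<and> phiB F G f \<alpha> \<beta> = 0"
      using nt_zero[OF fpos] by simp
    show "\<forall>\<beta>>0. \<forall>\<alpha>1>0. \<forall>\<alpha>2>0. \<not> no_trade G f \<alpha>1 \<beta> \<and> \<not> no_trade G f \<alpha>2 \<beta> \<and> \<alpha>1 < \<alpha>2 \<longrightarrow>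
        phiA F G f \<alpha>1 \<beta> < phiA F G f \<alpha>2 \<beta> \<and> phiB F G f \<alpha>2 \<beta> < phiB F G f \<alpha>1 \<beta>"
      using mono_alpha[OF fpos] by simp
    show "\<forall>\<alpha>>0. \<forall>\<beta>1>0. \<forall>\<beta>2>0. \<not> no_trade G f \<alpha> \<beta>1 \<and> \<not> no_trade G f \<alpha> \<beta>2 \<and> \<beta>1 < \<beta>2 \<longrightarrow>
        phiA F G f \<alpha> \<beta>1 < phiA F G f \<alpha> \<beta>2 \<and> phiB F G f \<alpha> \<beta>2 < phiB F G f \<alpha> \<beta>1"
      using mono_beta[OF fpos] by simp
    show "\<forall>yA>0. \<forall>yB>0. \<forall>a>0. \<forall>b>0.
        (let DA = phiA F G f (a / b) (yA / yB) * yA; DB = phiB F G f (a / b) (yA / yB) * yB in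
         feasible F yA yB DA DB \<and>
         (\<forall>DA' DB'. feasible F yA yB DA' DB' \<and> (DA', DB') \<noteq> (DA, DB) \<longrightarrow>
            trade_obj f a b DA' DB' < trade_obj f a b DA DB))"
      unfolding Let_def using opt[OF fpos] by simp
  qed
qed

end
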